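(* For every integer $k\ge1$, let $X_k=U_{k+1}$ and $Y_k=U_k\overset{k+2}{\sqcup}U_0$. Then $d_{\mathrm{GH}}(X_k,Y_k)\ge\frac k4$.
   Context: For metric spaces $X,Y$ and $a>0$, $X\overset{a}{\sqcup}Y$ denotes the disjoint union $Z=X\sqcup Y$ with $d_Z=d_X$ on $X$, $d_Z=d_Y$ on $Y$, and $d_Z(z,z')=a$ when one point lies in $X$ and the other in $Y$. The sequence $(U_k)_{k\ge0}$ is defined by: $U_0$ is a one-point space, $U_1$ is a two-point space with distance $1$, and $U_k=U_{k-2}\overset{k}{\sqcup}U_{k-2}$ for $k>1$. For a map $f:X\to Y$, $\operatorname{dis}(f)=\sup_{x,x'\in X}|d_X(x,x')-d_Y(f(x),f(x'))|$; for $f:X\to Y$, $g:Y\to X$, $\operatorname{codis}(f,g)=\sup_{x\in X,y\in Y}|d_X(x,g(y))-d_Y(f(x),y)|$. The Gromov--Hausdorff distance between compact metric spaces satisfies $d_{\mathrm{GH}}(X,Y)=\frac12\inf_{f:X\to Y,\,g:Y\to X}\max\{\operatorname{dis}(f),\operatorname{dis}(g),\operatorname{codis}(f,g)\}$ (equivalent to the usual definition via isometric embeddings into a common metric space). *)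

theory Defs
  imports Complex_Main
begin

type_synonym 'a mspace = "'a set \<times> ('a \<Rightarrow> 'a \<Rightarrow> real)"

text \<open>Disjoint union X \<sqcup>^a Y, realised with tagged points: True # x for x in X,
  False # y for y in Y.\<close>
definition dunion :: "bool list mspace \<Rightarrow> real \<Rightarrow> bool list mspace \<Rightarrow> bool list mspace" where
  "dunion XX a YY = (case XX of (X, dX) \<Rightarrow> case YY of (Y, dY) \<Rightarrow>
     ((Cons True) ` X \<union> (Cons False) ` Y,
      \<lambda>z z'. if hd z = hd z'
             then (if hd z then dX (tl z) (tl z') else dY (tl z) (tl z'))
             else a))"

fun U :: "nat \<Rightarrow> bool list mspace" where
  "U 0 = ({[]}, \<lambda>x y. 0)"
| "U (Suc 0) = ({[False], [True]}, \<lambda>x y. if x = y then 0 else 1)"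
| "U (Suc (Suc n)) = dunion (U n) (real (Suc (Suc n))) (U n)"

definition dis :: "'a mspace \<Rightarrow> 'b mspace \<Rightarrow> ('a \<Rightarrow> 'b) \<Rightarrow> real" where
  "dis XX YY f = (SUP p \<in> fst XX \<times> fst XX.
      \<bar>snd XX (fst p) (snd p) - snd YY (f (fst p)) (f (snd p))\<bar>)"

definition codis :: "'a mspace \<Rightarrow> 'b mspace \<Rightarrow> ('a \<Rightarrow> 'b) \<Rightarrow> ('b \<Rightarrow> 'a) \<Rightarrow> real" where
  "codis XX YY f g = (SUP p \<in> fst XX \<times> fst YY.
      \<bar>snd XX (fst p) (g (snd p)) - snd YY (f (fst p)) (snd p)\<bar>)"

definition dGH :: "'a mspace \<Rightarrow> 'b mspace \<Rightarrow> real" where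
  "dGH XX YY = (1/2) * (INF fg \<in> {(f, g). f ` fst XX \<subseteq> fst YY \<and> g ` fst YY \<subseteq> fst XX}.
      max (dis XX YY (fst fg)) (max (dis YY XX (snd fg)) (codis XX YY (fst fg) (snd fg))))"

end

theory Submission
  imports Defs
begin

lemma fst_dunion: "fst (dunion XX a YY) = Cons True ` fst XX \<union> Cons False ` fst YY"
  by (cases XX; cases YY) (simp add: dunion_def)

lemma snd_dunion: "snd (dunion XX a YY) z z' =
   (if hd z = hd z' then (if hd z then snd XX (tl z) (tl z') else snd YY (tl z) (tl z')) else a)"
  by (cases XX; cases YY) (simp add: dunion_def)

lemma U_fin: "finite (fst (U n))"
  by (induction n rule: U.induct) (auto simp: fst_dunion)

lemma U_ne: "fst (U n) \<noteq> {}"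
  by (induction n rule: U.induct) (auto simp: fst_dunion)

lemma U_refl: "snd (U n) x x = 0"
  by (induction n arbitrary: x rule: U.induct) (auto simp: snd_dunion)

lemma U_dist:
  assumes "x0 \<in> fst (U n)" "1 \<le> j" "j \<le> n" "even (n - j)"
  shows "\<exists>x \<in> fst (U n). snd (U n) x0 x = real j"
  using assms
proof (induction n arbitrary: x0 j rule: U.induct)
  case 1
  then show ?case by simp
next
  case 2
  then show ?case by auto
next
  case (3 n)
  from \<open>x0 \<in> fst (U (Suc (Suc n)))\<close> obtain b a where x0: "x0 = b # a" and a: "a \<in> fst (U n)"
    by (auto simp: fst_dunion)
  show ?case
  proof (cases "j = Suc (Suc n)")
    case True
    have "(\<not>b) # a \<in> fst (U (Suc (Suc n)))" using a by (cases b) (auto simp: fst_dunion)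
    moreover have "snd (U (Suc (Suc n))) x0 ((\<not>b) # a) = real j"
      using True x0 by (simp add: snd_dunion)
    ultimately show ?thesis by blast
  next
    case False
    have "j \<le> Suc (Suc n)" "even (Suc (Suc n) - j)" using "3" by auto
    with False have "j \<le> n" "even (n - j)" by presburger+
    with "3.IH"[OF a] \<open>1 \<le> j\<close> obtain a' where a': "a' \<in> fst (U n)" "snd (U n) a a' = real j"
      by blast
    have "b # a' \<in> fst (U (Suc (Suc n)))" using a' by (cases b) (auto simp: fst_dunion)
    moreover have "snd (U (Suc (Suc n))) x0 (b # a') = real j"
      using a' x0 by (simp add: snd_dunion)
    ultimately show ?thesis by blast
  qed
qed

theorem lemma2:
  fixes k :: nat
  assumes "k \<ge> 1"
  shows "dGH (U (k + 1)) (dunion (U k) (real (k + 2)) (U 0)) \<ge> real k / 4"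
proof -
  define X where "X = U (k + 1)"
  define Y where "Y = dunion (U k) (real (k + 2)) (U 0)"
  define p :: "bool list" where "p = [False]"
  have pY: "p \<in> fst Y" by (simp add: Y_def p_def fst_dunion)
  have dYp: "snd Y y p = (if y = p then 0 else real (k + 2))" if "y \<in> fst Y" for y
    using that by (auto simp: Y_def p_def fst_dunion snd_dunion)
  have dpY: "snd Y p y = (if y = p then 0 else real (k + 2))" if "y \<in> fst Y" for y
    using that by (auto simp: Y_def p_def fst_dunion snd_dunion)
  have finX: "finite (fst X)" by (simp add: X_def U_fin)
  have finY: "finite (fst Y)" by (simp add: Y_def fst_dunion U_fin)
  obtain j :: nat where j: "k \<le> 2*j" "2*j \<le> k+4" "1 \<le> j" "j \<le> k+1" "even (k+1-j)"
  proof -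
    have "\<exists>j::nat. k \<le> 2*j \<and> 2*j \<le> k+4 \<and> 1 \<le> j \<and> j \<le> k+1 \<and> even (k+1-j)"
      using assms by presburger
    then show ?thesis using that by blast
  qed
  have main: "max (dis X Y f) (max (dis Y X g) (codis X Y f g)) \<ge> real k / 2"
    if f: "f ` fst X \<subseteq> fst Y" and g: "g ` fst Y \<subseteq> fst X" for f g
  proof -
    define x0 where "x0 = g p"
    have x0X: "x0 \<in> fst X" using g pY x0_def by blast
    have fx0: "f x0 \<in> fst Y" using f x0X by blast
    show ?thesis
    proof (cases "f x0 = p")
      case False
      have "\<bar>snd X x0 (g p) - snd Y (f x0) p\<bar> \<le> codis X Y f g"
        unfolding codis_def
        by (rule cSUP_upper2[where x="(x0, p)"])
           (use x0X pY finX finY in \<open>auto intro!: bdd_above_finite\<close>)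
      moreover have "\<bar>snd X x0 (g p) - snd Y (f x0) p\<bar> = real (k+2)"
        using False fx0 dYp[OF fx0] by (simp add: x0_def X_def U_refl)
      ultimately show ?thesis by simp
    next
      case True
      obtain x where x: "x \<in> fst X" "snd X x0 x = real j"
        using U_dist[of x0 "k+1" j] x0X j unfolding X_def by auto
      have fx: "f x \<in> fst Y" using f x by blast
      have "\<bar>snd X x0 x - snd Y (f x0) (f x)\<bar> \<le> dis X Y f"
        unfolding dis_def
        by (rule cSUP_upper2[where x="(x0, x)"])
           (use x0X x finX in \<open>auto intro!: bdd_above_finite\<close>)
      moreover have "\<bar>snd X x0 x - snd Y (f x0) (f x)\<bar> \<ge> real k / 2"
        using True x dpY[OF fx] j by auto
      ultimately show ?thesis using max.cobounded1[of "dis X Y f"] by linarith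
    qed
  qed
  have ne: "{(f, g). f ` fst X \<subseteq> fst Y \<and> g ` fst Y \<subseteq> fst X} \<noteq> {}"
  proof -
    obtain a where "a \<in> fst X" using U_ne X_def by blast
    then have "((\<lambda>_. p), (\<lambda>_. a)) \<in> {(f, g). f ` fst X \<subseteq> fst Y \<and> g ` fst Y \<subseteq> fst X}"
      using pY by auto
    then show ?thesis by blast
  qed
  have "real k / 2 \<le> (INF fg \<in> {(f, g). f ` fst X \<subseteq> fst Y \<and> g ` fst Y \<subseteq> fst X}.
      max (dis X Y (fst fg)) (max (dis Y X (snd fg)) (codis X Y (fst fg) (snd fg))))"
    by (rule cINF_greatest) (use ne main in auto)
  then show ?thesis unfolding dGH_def X_def[symmetric] Y_def[symmetric] by simp
qed

end
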